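(* For real $r \ge 2$, \[ \frac{1}{2(r+1)} < \log \rho\bigl(N(0,1), t_r\bigr) < \frac{1}{2r} . \]
   Context: $t_r$ is Student's t distribution with $r>0$ degrees of freedom, with density $f_r(x) = \frac{\Gamma((r+1)/2)}{\Gamma(r/2)\sqrt{r\pi}} (1 + x^2/r)^{-(r+1)/2}$; $N(0,1)$ is the standard Gaussian distribution. For probability measures $Q,P$ on $(\mathcal{X},\mathcal{A})$, $\rho(Q,P) := \sup_{A \in \mathcal{A}} Q(A)/P(A)$ with conventions $0/0 := 0$, $a/0 := \infty$ for $a>0$. *)

theory Defs
  imports "HOL-Probability.Probability"
begin

definition student_t_density :: "real \<Rightarrow> real \<Rightarrow> real" where
  "student_t_density r x =
     Gamma ((r + 1) / 2) / (Gamma (r / 2) * sqrt (r * pi)) * (1 + x\<^sup>2 / r) powr (-(r + 1) / 2)"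

definition student_t :: "real \<Rightarrow> real measure" where
  "student_t r = density lborel (\<lambda>x. ennreal (student_t_density r x))"

definition std_normal :: "real measure" where
  "std_normal = density lborel (\<lambda>x. ennreal (std_normal_density x))"

definition rho :: "'a measure \<Rightarrow> 'a measure \<Rightarrow> ennreal" where
  "rho Q P = (SUP A \<in> sets Q.
      (if emeasure P A = 0 then (if emeasure Q A = 0 then 0 else \<infinity>)
       else emeasure Q A / emeasure P A))"

end

theory Submission
  imports Defs "HOL-Real_Asymp.Real_Asymp"
begin

lemma P1:
  fixes x :: real assumes "x > 0"
  shows "ln x - ln (x + 1/2) \<ge> ln x / 2 - ln (x+1) / 2 - (1/(8 * x) - 1/(8 * (x+1)))"
proof -
  define q where "q = 1 / (x * (x+1))"
  define z where "z = (x+1/2)^2 / (x * (x+1))"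
  have z: "z > 0" using assms by (simp add: z_def)
  have D1: "x * 4 + x * (x * 4) \<noteq> 0" "1 + (x * 4 + x * (x * 4)) \<noteq> 0" using assms
    by (smt (verit) mult_pos_pos)+
  have "ln z \<le> z - 1" using z by (rule ln_le_minus_one)
  moreover have "z - 1 = q/4" using assms D1 unfolding z_def q_def by (simp add: field_simps power2_eq_square)
  moreover have "ln z = 2 * ln (x+1/2) - ln x - ln (x+1)" using assms
    by (simp add: z_def ln_div ln_mult ln_realpow)
  moreover have "1/(8 * x) - 1/(8 * (x+1)) = q/8" using assms unfolding q_def by (simp add: field_simps)
  ultimately show ?thesis by linarith
qed

lemma P2:
  fixes x :: real assumes "x > 0"
  shows "ln x - ln (x + 1/2) \<le> ln x / 2 - ln (x+1) / 2 - (1/(4 * (2 * x+1)) - 1/(4 * (2 * x+3)))"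
proof -
  define z where "z = (x+1/2)^2 / (x * (x+1))"
  define v where "v = 1/(2 * x+1)^2"
  define w where "w = 1/((2 * x+1) * (2 * x+3))"
  define L where "L = ln (1/z)"
  have z: "z > 0" using assms by (simp add: z_def)
  have D1: "x * 4 + x * (x * 4) \<noteq> 0" "1 + (x * 4 + x * (x * 4)) \<noteq> 0" using assms
    by (smt (verit) mult_pos_pos)+
  have "L \<le> 1/z - 1" using z unfolding L_def by (intro ln_le_minus_one) simp
  moreover have "1/z - 1 = - v" using assms D1 unfolding z_def v_def by (simp add: field_simps power2_eq_square)
  moreover have "L = ln x + ln (x+1) - 2 * ln (x+1/2)" using assms
    by (simp add: L_def z_def ln_div ln_mult ln_realpow)
  moreover have "1/(4 * (2 * x+1)) - 1/(4 * (2 * x+3)) = w/2" using assms unfolding w_def by (simp add: divide_simps) (simp add: algebra_simps)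
  moreover have "w \<le> v" using assms unfolding v_def w_def
    by (intro divide_left_mono) (auto simp: power2_eq_square intro!: mult_pos_pos)
  ultimately show ?thesis by linarith
qed

lemma T_lower:
  fixes s :: real assumes "s > 0"
  shows "(\<Sum>k<(m::nat). ln (s + real k) - ln (s + real k + 1/2)) \<ge> ln s / 2 - ln (s + real m) / 2 - 1/(8 * s) + 1/(8 * (s + real m))"
proof (induction m)
  case 0 then show ?case by simp
next
  case (Suc m)
  have "ln (s + real m) - ln (s + m + 1/2) \<ge> ln (s+m) / 2 - ln (s+m+1) / 2 - (1/(8 * (s + real m)) - 1/(8 * (s+m+1)))"
    using P1[of "s+m"] assms by simp
  then show ?case using Suc by (simp add: algebra_simps)
qed

lemma T_upper:
  fixes s :: real assumes "s > 0"
  shows "(\<Sum>k<(m::nat). ln (s + real k) - ln (s + real k + 1/2)) \<le> ln s / 2 - ln (s + real m) / 2 - 1/(4 * (2 * s+1)) + 1/(4 * (2 * s+2 * real m+1))"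
proof (induction m)
  case 0 then show ?case by simp
next
  case (Suc m)
  have "ln (s + real m) - ln (s + m + 1/2) \<le> ln (s+m) / 2 - ln (s+m+1) / 2 - (1/(4 * (2 * (s+m)+1)) - 1/(4 * (2 * (s+m)+3)))"
    using P2[of "s+m"] assms by simp
  then show ?case using Suc by (simp add: algebra_simps)
qed

lemma ln_poch:
  fixes a :: real assumes "a > 0"
  shows "ln (pochhammer a m) = (\<Sum>k<m. ln (a + real k))"
  using assms by (simp add: pochhammer_prod ln_prod atLeast0LessThan add_pos_nonneg)

lemma W_eq:
  fixes s :: real assumes "s > 0" and "n > 0"
  shows "ln (Gamma_series (s + 1/2) n / Gamma_series s n)
       = ln (real n) / 2 + (\<Sum>k<n+1. ln (s + real k) - ln (s + real k + 1/2))"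
proof -
  have p1: "pochhammer s (n+1) > 0" "pochhammer (s+1/2) (n+1) > 0" using assms
    by (auto intro!: pochhammer_pos)
  have "Gamma_series (s + 1/2) n / Gamma_series s n
      = exp ((s + 1/2) * ln (real n)) / exp (s * ln (real n)) * (pochhammer s (n+1) / pochhammer (s+1/2) (n+1))"
    unfolding Gamma_series_def using p1 by (simp add: field_simps)
  also have "exp ((s + 1/2) * ln (real n)) / exp (s * ln (real n)) = exp (ln (real n) / 2)"
    by (simp add: exp_diff[symmetric] algebra_simps)
  finally have "ln (Gamma_series (s + 1/2) n / Gamma_series s n)
     = ln (real n) / 2 + ln (pochhammer s (n+1)) - ln (pochhammer (s+1/2) (n+1))"
    using p1 by (simp add: ln_mult ln_div)
  also have "\<dots> = ln (real n) / 2 + (\<Sum>k<n+1. ln (s + real k) - ln (s + real k + 1/2))"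
    using assms by (simp add: ln_poch sum_subtractf add_ac)
  finally show ?thesis .
qed


lemma lnlim:
  fixes s :: real assumes "s > 0"
  shows "(\<lambda>n. ln (real n) - ln (s + real n + 1)) \<longlonglongrightarrow> 0"
  using assms by real_asymp

lemma invlim:
  fixes s :: real assumes "s > 0"
  shows "(\<lambda>n. 1/(4 * (2 * s + 2 * real (n+1) + 1))) \<longlonglongrightarrow> 0"
  using assms by real_asymp

lemma auxL: "(W::real) = a/2 + S \<Longrightarrow> l/2 - A/2 - c + p \<le> S \<Longrightarrow> 0 < p \<Longrightarrow> A = B \<Longrightarrow> (a - B)/2 + (l/2 - c) \<le> W"
  by argo
lemma auxU: "(W::real) = a/2 + S \<Longrightarrow> S \<le> l/2 - A/2 - c + p \<Longrightarrow> A = B \<Longrightarrow> W \<le> (a - B)/2 + (l/2 - c) + p"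
  by argo

lemma GR:
  fixes s :: real assumes s: "s > 0"
  shows "ln s / 2 - 1/(8 * s) \<le> ln (Gamma (s + 1/2)) - ln (Gamma s)"
    and "ln (Gamma (s + 1/2)) - ln (Gamma s) \<le> ln s / 2 - 1/(4 * (2 * s + 1))"
proof -
  have g1: "Gamma s > 0" "Gamma (s + 1/2) > 0" using s by (auto intro!: Gamma_real_pos)
  define W where "W n = ln (Gamma_series (s + 1/2) n / Gamma_series s n)" for n
  have "(\<lambda>n. Gamma_series (s + 1/2) n / Gamma_series s n) \<longlonglongrightarrow> Gamma (s + 1/2) / Gamma s"
    using g1 by (intro tendsto_intros) auto
  then have "W \<longlonglongrightarrow> ln (Gamma (s + 1/2) / Gamma s)"
    unfolding W_def using g1 by (intro tendsto_intros) auto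
  then have WL: "W \<longlonglongrightarrow> ln (Gamma (s + 1/2)) - ln (Gamma s)"
    using g1 by (simp add: ln_div)
  have ev: "eventually (\<lambda>n. n > (0::nat)) sequentially" by (rule eventually_gt_at_top)
  have L1: "(\<lambda>n. (ln (real n) - ln (s + real n + 1))/2 + (ln s / 2 - 1/(8 * s))) \<longlonglongrightarrow> 0/2 + (ln s / 2 - 1/(8 * s))"
    using lnlim[OF s] by (intro tendsto_intros) auto
  show "ln s / 2 - 1/(8 * s) \<le> ln (Gamma (s + 1/2)) - ln (Gamma s)"
  proof (rule tendsto_le[OF _ WL])
    show "(\<lambda>n. (ln (real n) - ln (s + real n + 1))/2 + (ln s / 2 - 1/(8 * s))) \<longlonglongrightarrow> ln s / 2 - 1/(8 * s)"
      using L1 by simp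
    show "eventually (\<lambda>n. (ln (real n) - ln (s + real n + 1))/2 + (ln s / 2 - 1/(8 * s)) \<le> W n) sequentially"
      using ev
    proof eventually_elim
      case (elim n)
      have "W n = ln (real n) / 2 + (\<Sum>k<n+1. ln (s + real k) - ln (s + real k + 1/2))"
        unfolding W_def using s elim by (rule W_eq)
      moreover have "(\<Sum>k<n+1. ln (s + real k) - ln (s + real k + 1/2)) \<ge> ln s / 2 - ln (s + real (n+1)) / 2 - 1/(8 * s) + 1/(8 * (s + real (n+1)))"
        by (rule T_lower[OF s])
      moreover have "1/(8 * (s + real (n+1))) > 0" using s by simp
      moreover have "ln (s + real (n+1)) = ln (s + real n + 1)" by (simp add: add_ac)
      ultimately show ?case by (rule auxL)
    qed
  qed simp
  have L2: "(\<lambda>n. (ln (real n) - ln (s + real n + 1))/2 + (ln s / 2 - 1/(4 * (2 * s + 1))) + 1/(4 * (2 * s + 2 * real (n+1) + 1))) \<longlonglongrightarrow> 0/2 + (ln s / 2 - 1/(4 * (2 * s + 1))) + 0"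
    using lnlim[OF s] invlim[OF s] by (intro tendsto_intros) auto
  show "ln (Gamma (s + 1/2)) - ln (Gamma s) \<le> ln s / 2 - 1/(4 * (2 * s + 1))"
  proof (rule tendsto_le[OF _ _ WL])
    show "(\<lambda>n. (ln (real n) - ln (s + real n + 1))/2 + (ln s / 2 - 1/(4 * (2 * s + 1))) + 1/(4 * (2 * s + 2 * real (n+1) + 1))) \<longlonglongrightarrow> ln s / 2 - 1/(4 * (2 * s + 1))"
      using L2 by simp
    show "eventually (\<lambda>n. W n \<le> (ln (real n) - ln (s + real n + 1))/2 + (ln s / 2 - 1/(4 * (2 * s + 1))) + 1/(4 * (2 * s + 2 * real (n+1) + 1))) sequentially"
      using ev
    proof eventually_elim
      case (elim n)
      have "W n = ln (real n) / 2 + (\<Sum>k<n+1. ln (s + real k) - ln (s + real k + 1/2))"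
        unfolding W_def using s elim by (rule W_eq)
      moreover have "(\<Sum>k<n+1. ln (s + real k) - ln (s + real k + 1/2)) \<le> ln s / 2 - ln (s + real (n+1)) / 2 - 1/(4 * (2 * s+1)) + 1/(4 * (2 * s+2 * real (n+1)+1))"
        by (rule T_upper[OF s])
      moreover have "ln (s + real (n+1)) = ln (s + real n + 1)" by (simp add: add_ac)
      ultimately show ?case by (rule auxU)
    qed
  qed simp
qed

lemma E1:
  fixes t :: real assumes t: "t > 0"
  shows "ln (1 + t) < t * (2 + t) / (2 * (1 + t))"
proof -
  define f where "f u = u * (2 + u) / (2 * (1 + u)) - ln (1 + u)" for u :: real
  have "f 0 < f t"
  proof (rule DERIV_pos_imp_increasing_open[OF t])
    fix x :: real assume x: "0 < x" "x < t"
    have "DERIV f x :> ((2 + 2 * x) * (2 * (1 + x)) - x * (2 + x) * 2) / (2 * (1 + x))^2 - 1 / (1 + x)"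
      unfolding f_def using x
      by (auto intro!: derivative_eq_intros simp: power2_eq_square)
    moreover have "((2 + 2 * x) * (2 * (1 + x)) - x * (2 + x) * 2) / (2 * (1 + x))^2 - 1 / (1 + x) = x^2 / (2 * (1 + x)^2)"
      using x by (simp add: divide_simps; simp add: algebra_simps power2_eq_square)
    moreover have "x^2 / (2 * (1 + x)^2) > 0" using x by simp
    ultimately show "\<exists>y. DERIV f x :> y \<and> y > 0" by auto
  next
    show "continuous_on {0..t} f" unfolding f_def
      by (intro continuous_intros) auto
  qed
  then show ?thesis by (simp add: f_def)
qed

lemma E2:
  fixes t :: real assumes t: "t > 0"
  shows "t * (2 + 3 * t) / (2 * (1 + t)^2) < ln (1 + t)"
proof -
  define f where "f u = ln (1 + u) - u * (2 + 3 * u) / (2 * (1 + u)^2)" for u :: real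
  have "f 0 < f t"
  proof (rule DERIV_pos_imp_increasing_open[OF t])
    fix x :: real assume x: "0 < x" "x < t"
    have "DERIV f x :> 1 / (1 + x) - ((2 + 6 * x) * (2 * (1 + x)^2) - x * (2 + 3 * x) * (4 * (1 + x))) / (2 * (1 + x)^2)^2"
    proof -
      have nz: "2 + (x * 4 + x * (x * 2)) \<noteq> 0" using x by (smt (verit) mult_pos_pos)
      show ?thesis  unfolding f_def using x nz
      by (auto intro!: derivative_eq_intros simp: power2_eq_square algebra_simps)
    qed
    moreover have "1 / (1 + x) - ((2 + 6 * x) * (2 * (1 + x)^2) - x * (2 + 3 * x) * (4 * (1 + x))) / (2 * (1 + x)^2)^2 = x^2 / (1 + x)^3"
      using x by (simp add: divide_simps; simp add: eval_nat_numeral algebra_simps)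
    moreover have "x^2 / (1 + x)^3 > 0" using x by simp
    ultimately show "\<exists>y. DERIV f x :> y \<and> y > 0" by auto
  next
    show "continuous_on {0..t} f" unfolding f_def
      by (intro continuous_intros) auto
  qed
  then show ?thesis by (simp add: f_def)
qed

lemma K_upper:
  fixes r :: real assumes r: "r > 0"
  shows "(r + 1) / 2 * ln (1 + 1 / r) - 1/2 < 1 / (4 * r)"
proof -
  have "ln (1 + 1/r) < (1/r) * (2 + 1/r) / (2 * (1 + 1/r))" using E1[of "1/r"] r by simp
  also have "\<dots> = (2 * r + 1) / (2 * r * (r + 1))" using r by (simp add: divide_simps; simp add: algebra_simps power2_eq_square)
  finally have "(r + 1) / 2 * ln (1 + 1 / r) < (r + 1) / 2 * ((2 * r + 1) / (2 * r * (r + 1)))"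
    using r by (intro mult_strict_left_mono) auto
  also have "\<dots> = 1/2 + 1 / (4 * r)" using r by (simp add: divide_simps; simp add: algebra_simps)
  finally show ?thesis by simp
qed

lemma K_lower:
  fixes r :: real assumes r: "r > 0"
  shows "1 / (4 * (r + 1)) < (r + 1) / 2 * ln (1 + 1 / r) - 1/2"
proof -
  have "(1/r) * (2 + 3 * (1/r)) / (2 * (1 + 1/r)^2) < ln (1 + 1/r)" using E2[of "1/r"] r by simp
  moreover have "(1/r) * (2 + 3 * (1/r)) / (2 * (1 + 1/r)^2) = (2 * r + 3) / (2 * (r + 1)^2)" using r
    by (simp add: divide_simps; simp add: algebra_simps power2_eq_square)
  ultimately have "(r + 1) / 2 * ((2 * r + 3) / (2 * (r + 1)^2)) < (r + 1) / 2 * ln (1 + 1 / r)"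
    using r by (intro mult_strict_left_mono) auto
  moreover have "(r + 1) / 2 * ((2 * r + 3) / (2 * (r + 1)^2)) = 1/2 + 1 / (4 * (r + 1))" using r
    by (simp add: divide_simps; simp add: algebra_simps power2_eq_square)
  ultimately show ?thesis by simp
qed

theorem lemma8:
  fixes r :: real
  assumes "r \<ge> 2"
  shows "\<exists>c. rho std_normal (student_t r) = ennreal c \<and>
           1 / (2 * (r + 1)) < ln c \<and> ln c < 1 / (2 * r)"
proof -
  have r0: "r > 0" using assms by simp
  define C where "C = Gamma ((r + 1) / 2) / (Gamma (r / 2) * sqrt (r * pi))"
  have C: "C > 0" using r0 by (auto simp: C_def intro!: divide_pos_pos mult_pos_pos Gamma_real_pos)
  define f where "f x = student_t_density r x" for x
  have f_eq: "f x = C * (1 + x\<^sup>2/r) powr (-(r+1)/2)" for x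
    unfolding f_def student_t_density_def C_def by simp
  have base: "1 + x\<^sup>2/r > 0" for x :: real using r0 by (simp add: add_pos_nonneg)
  have fpos: "f x > 0" for x using C base[of x] by (simp add: f_eq)
  define \<phi> where "\<phi> x = std_normal_density x" for x
  have phi_eq: "\<phi> x = 1 / sqrt (2 * pi) * exp (- x\<^sup>2 / 2)" for x
    unfolding \<phi>_def by (rule std_normal_density_def)
  have phipos: "\<phi> x > 0" for x by (simp add: phi_eq)
  have lnC: "ln C = ln (Gamma ((r + 1) / 2)) - ln (Gamma (r / 2)) - ln (r * pi) / 2"
  proof -
    have p1: "Gamma ((r + 1) / 2) > 0" "Gamma (r / 2) > 0" using r0 by (auto intro!: Gamma_real_pos)
    have p2: "sqrt (r * pi) > 0" using r0 by simp
    have "ln C = ln (Gamma ((r + 1) / 2)) - ln (Gamma (r / 2) * sqrt (r * pi))"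
      unfolding C_def by (rule ln_divide_pos[OF p1(1) mult_pos_pos[OF p1(2) p2]])
    also have "ln (Gamma (r / 2) * sqrt (r * pi)) = ln (Gamma (r / 2)) + ln (sqrt (r * pi))"
      by (rule ln_mult_pos[OF p1(2) p2])
    finally have "ln C = ln (Gamma ((r + 1) / 2)) - (ln (Gamma (r / 2)) + ln (sqrt (r * pi)))" .
    then show ?thesis using r0 by (simp add: ln_sqrt)
  qed
  have lnphi: "ln (\<phi> x) = - ln (2 * pi) / 2 - x\<^sup>2 / 2" for x
    by (simp add: phi_eq ln_mult ln_div ln_sqrt; simp add: algebra_simps)
  have lnf: "ln (f x) = ln C - (r + 1) / 2 * ln (1 + x\<^sup>2/r)" for x
    using C base[of x] by (simp add: f_eq ln_mult; simp add: algebra_simps)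
  define M where "M = \<phi> 1 / f 1"
  have Mpos: "M > 0" using phipos fpos by (simp add: M_def)
  have lnM: "ln M = - ln (2 * pi) / 2 - ln C - 1/2 + (r + 1) / 2 * ln (1 + 1/r)"
    using phipos[of 1] fpos[of 1] by (simp add: M_def ln_div lnphi lnf)
  have key: "- x\<^sup>2 / 2 + (r + 1) / 2 * ln (1 + x\<^sup>2/r) \<le> - 1/2 + (r + 1) / 2 * ln (1 + 1/r)" for x
  proof -
    have b1: "1 + 1/r > 0" using r0 by (simp add: add_pos_pos)
    have "ln ((1 + x\<^sup>2/r) / (1 + 1/r)) \<le> (1 + x\<^sup>2/r) / (1 + 1/r) - 1"
      using base[of x] b1 by (intro ln_le_minus_one) simp
    also have "(1 + x\<^sup>2/r) / (1 + 1/r) - 1 = (x\<^sup>2 - 1) / (r + 1)"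
      using r0 by (simp add: divide_simps; simp add: algebra_simps)
    finally have "ln (1 + x\<^sup>2/r) - ln (1 + 1/r) \<le> (x\<^sup>2 - 1) / (r + 1)"
      using base[of x] b1 by (simp add: ln_div)
    then have "(r + 1) / 2 * (ln (1 + x\<^sup>2/r) - ln (1 + 1/r)) \<le> (r + 1) / 2 * ((x\<^sup>2 - 1) / (r + 1))"
      using r0 by (intro mult_left_mono) auto
    also have "\<dots> = (x\<^sup>2 - 1) / 2" using r0 by (simp add: divide_simps; simp add: algebra_simps)
    finally have H: "(r + 1) / 2 * (ln (1 + x\<^sup>2/r) - ln (1 + 1/r)) \<le> (x\<^sup>2 - 1) / 2" .
    have "(r + 1) / 2 * (ln (1 + x\<^sup>2/r) - ln (1 + 1/r)) = (r + 1) / 2 * ln (1 + x\<^sup>2/r) - (r + 1) / 2 * ln (1 + 1/r)"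
      by (rule right_diff_distrib)
    then show ?thesis using H by argo
  qed
  have bound: "\<phi> x \<le> M * f x" for x
  proof -
    have "ln (\<phi> x) \<le> ln M + ln (f x)"
      using key[of x] by (simp add: lnphi lnM lnf)
    also have "\<dots> = ln (M * f x)" using Mpos fpos[of x] by (simp add: ln_mult)
    finally show ?thesis using phipos[of x] Mpos fpos[of x]
      by (subst (asm) ln_le_cancel_iff) auto
  qed
  have GR1: "ln (r/2) / 2 - 1/(8 * (r/2)) \<le> ln (Gamma (r/2 + 1/2)) - ln (Gamma (r/2))"
    and GR2: "ln (Gamma (r/2 + 1/2)) - ln (Gamma (r/2)) \<le> ln (r/2) / 2 - 1/(4 * (2 * (r/2) + 1))"
    using GR[of "r/2"] r0 by auto
  have g: "ln (Gamma (r/2 + 1/2)) = ln (Gamma ((r + 1) / 2))" by (simp add: add_divide_distrib)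
  have lnr: "ln (r * pi) / 2 - ln (2 * pi) / 2 = ln (r/2) / 2"
    using r0 by (simp add: ln_mult ln_div; simp add: field_simps)
  have e1: "1/(8 * (r/2)) = 1 / (4 * r)" by simp
  have e2: "1/(4 * (2 * (r/2) + 1)) = 1 / (4 * (r + 1))" by simp
  have lnM2: "ln M = ln (r/2) / 2 - (ln (Gamma (r/2 + 1/2)) - ln (Gamma (r/2))) + ((r + 1) / 2 * ln (1 + 1/r) - 1/2)"
    using lnM lnC lnr g by argo
  have lnM_upper: "ln M < 1 / (2 * r)"
  proof -
    have "1 / (4 * r) + 1 / (4 * r) = 1 / (2 * r)" by simp
    then show ?thesis using lnM2 GR1[unfolded e1] K_upper[OF r0] by argo
  qed
  have lnM_lower: "1 / (2 * (r + 1)) < ln M"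
  proof -
    have "1 / (4 * (r + 1)) + 1 / (4 * (r + 1)) = 1 / (2 * (r + 1))" by (simp add: divide_simps)
    then show ?thesis using lnM2 GR2[unfolded e2] K_lower[OF r0] by argo
  qed
  have Qd: "std_normal = density lborel (\<lambda>x. ennreal (\<phi> x))" unfolding std_normal_def \<phi>_def ..
  have Pd: "student_t r = density lborel (\<lambda>x. ennreal (f x))" unfolding student_t_def f_def ..
  have f_fun: "f = (\<lambda>x. C * (1 + x\<^sup>2/r) powr (-(r+1)/2))" by (rule ext) (rule f_eq)
  have meas_f[measurable]: "f \<in> borel_measurable borel" unfolding f_fun by measurable
  have meas_phi[measurable]: "\<phi> \<in> borel_measurable borel" unfolding \<phi>_def by measurable
  have setsQ: "sets std_normal = sets lborel" unfolding Qd by simp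
  have setsP: "sets (student_t r) = sets lborel" unfolding Pd by simp
  have QA: "emeasure std_normal A = (\<integral>\<^sup>+x. ennreal (\<phi> x) * indicator A x \<partial>lborel)"
    if "A \<in> sets lborel" for A
    unfolding Qd using that by (intro emeasure_density) auto
  have PA: "emeasure (student_t r) A = (\<integral>\<^sup>+x. ennreal (f x) * indicator A x \<partial>lborel)"
    if "A \<in> sets lborel" for A
    unfolding Pd using that by (intro emeasure_density) auto
  have upper: "rho std_normal (student_t r) \<le> ennreal M"
    unfolding rho_def
  proof (rule SUP_least)
    fix A assume A: "A \<in> sets std_normal"
    then have Ab: "A \<in> sets lborel" by (simp add: setsQ)
    have "emeasure std_normal A \<le> (\<integral>\<^sup>+x. ennreal M * (ennreal (f x) * indicator A x) \<partial>lborel)"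
      unfolding QA[OF Ab]
    proof (rule nn_integral_mono)
      fix x :: real
      have "ennreal (\<phi> x) \<le> ennreal M * ennreal (f x)"
        using bound[of x] Mpos fpos[of x] by (simp add: ennreal_mult[symmetric])
      then show "ennreal (\<phi> x) * indicator A x \<le> ennreal M * (ennreal (f x) * indicator A x)"
        by (auto split: split_indicator)
    qed
    also have "\<dots> = ennreal M * emeasure (student_t r) A"
      unfolding PA[OF Ab] using Ab by (intro nn_integral_cmult) auto
    finally have le: "emeasure std_normal A \<le> emeasure (student_t r) A * ennreal M"
      by (simp add: mult.commute)
    show "(if emeasure (student_t r) A = 0 then (if emeasure std_normal A = 0 then 0 else \<infinity>)
       else emeasure std_normal A / emeasure (student_t r) A) \<le> ennreal M"
    proof (cases "emeasure (student_t r) A = 0")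
      case True
      then have "emeasure std_normal A = 0" using le by simp
      then show ?thesis using True by simp
    next
      case False
      have "emeasure std_normal A / emeasure (student_t r) A \<le> ennreal M"
        by (rule divide_le_posI_ennreal) (use False le in \<open>auto simp: zero_less_iff_neq_zero\<close>)
      then show ?thesis using False by simp
    qed
  qed
  define l where "l = (1 / (2 * (r + 1)) + ln M) / 2"
  define L where "L = exp l"
  have Lpos: "L > 0" by (simp add: L_def)
  have l_low: "1 / (2 * (r + 1)) < l" using lnM_lower by (simp add: l_def)
  have lM: "l < ln M" using lnM_lower by (simp add: l_def)
  have LM: "L < M" unfolding L_def using lM Mpos
    by (metis exp_less_cancel_iff exp_ln)
  define h where "h x = \<phi> x - L * f x" for x
  have h1: "h 1 > 0"
  proof -
    have "\<phi> 1 = M * f 1" using fpos[of 1] by (simp add: M_def)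
    then have "h 1 = (M - L) * f 1" by (simp add: h_def algebra_simps)
    then show ?thesis using LM fpos[of 1] by simp
  qed
  have hcont: "isCont h 1"
    unfolding h_def phi_eq f_fun using base[of 1] r0 by (intro continuous_intros) auto
  obtain d where d: "d > 0" "\<And>x. dist x 1 < d \<Longrightarrow> h x > 0"
  proof -
    from hcont h1 obtain d where d0: "d > 0" and dd: "\<forall>x. dist x 1 < d \<longrightarrow> dist (h x) (h 1) < h 1"
      unfolding continuous_at_eps_delta by blast
    have "h x > 0" if "dist x 1 < d" for x
    proof -
      have "\<bar>h x - h 1\<bar> < h 1" using dd that by (simp add: dist_real_def)
      then show ?thesis by linarith
    qed
    then show ?thesis using that[of d] d0 by blast
  qed
  define A where "A = {1 - d <..< 1 + d}"
  have Ab: "A \<in> sets lborel" unfolding A_def by simp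
  have inA: "x \<in> A \<Longrightarrow> h x > 0" for x using d unfolding A_def by (intro d(2)) (auto simp: dist_real_def)
  have QL: "ennreal L * emeasure (student_t r) A \<le> emeasure std_normal A"
  proof -
    have "ennreal L * emeasure (student_t r) A = (\<integral>\<^sup>+x. ennreal L * (ennreal (f x) * indicator A x) \<partial>lborel)"
      unfolding PA[OF Ab] using Ab by (intro nn_integral_cmult[symmetric]) auto
    also have "\<dots> \<le> emeasure std_normal A"
      unfolding QA[OF Ab]
    proof (rule nn_integral_mono)
      fix x :: real
      have "x \<in> A \<Longrightarrow> ennreal L * ennreal (f x) \<le> ennreal (\<phi> x)"
        using inA[of x] Lpos fpos[of x] by (simp add: ennreal_mult[symmetric] h_def ennreal_leI)
      then show "ennreal L * (ennreal (f x) * indicator A x) \<le> ennreal (\<phi> x) * indicator A x"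
        by (auto split: split_indicator)
    qed
    finally show ?thesis .
  qed
  have PA0: "emeasure (student_t r) A \<noteq> 0"
  proof
    assume "emeasure (student_t r) A = 0"
    then have "A \<in> null_sets (density lborel (\<lambda>x. ennreal (f x)))"
      using Ab by (auto simp: null_sets_def Pd)
    then have "AE x in lborel. x \<in> A \<longrightarrow> ennreal (f x) = 0"
      by (subst (asm) null_sets_density_iff) auto
    then have "AE x in lborel. x \<notin> A"
      by eventually_elim (metis fpos ennreal_eq_0_iff not_le)
    then have "A \<in> null_sets lborel" using Ab by (simp add: AE_iff_null_sets)
    then have "emeasure lborel A = 0" by auto
    moreover have "emeasure lborel A = ennreal (2 * d)" using d unfolding A_def by simp
    ultimately show False using d by simp
  qed
  have PAtop: "emeasure (student_t r) A \<noteq> \<infinity>"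
  proof
    assume inf: "emeasure (student_t r) A = \<infinity>"
    have "emeasure std_normal A \<le> 1"
      unfolding Qd \<phi>_def by (rule prob_space.emeasure_le_1[OF prob_space_normal_density]) simp
    moreover have "ennreal L * emeasure (student_t r) A = \<infinity>" using inf Lpos by simp
    ultimately show False using QL by (simp add: top_unique)
  qed
  have lower: "ennreal L \<le> rho std_normal (student_t r)"
    unfolding rho_def
  proof (rule SUP_upper2)
    show "A \<in> sets std_normal" using Ab setsQ by simp
    have "ennreal L = ennreal L * emeasure (student_t r) A / emeasure (student_t r) A"
      using PA0 PAtop by (simp add: ennreal_mult_divide_eq)
    also have "\<dots> \<le> emeasure std_normal A / emeasure (student_t r) A"
      using QL by (rule divide_right_mono_ennreal)
    finally show "ennreal L \<le> (if emeasure (student_t r) A = 0 then (if emeasure std_normal A = 0 then 0 else \<infinity>)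
       else emeasure std_normal A / emeasure (student_t r) A)" using PA0 by simp
  qed
  define c where "c = enn2real (rho std_normal (student_t r))"
  have fin: "rho std_normal (student_t r) < top" by (rule le_less_trans[OF upper]) simp
  have rc: "rho std_normal (student_t r) = ennreal c" unfolding c_def by (rule ennreal_enn2real[symmetric, OF fin])
  have c0: "c \<ge> 0" unfolding c_def by (rule enn2real_nonneg)
  have "ennreal L \<le> ennreal c" using lower unfolding rc .
  then have cL: "L \<le> c" using c0 by (rule ennreal_le_iff[THEN iffD1, rotated])
  have cM: "c \<le> M" unfolding c_def using upper Mpos by (intro enn2real_leI) auto
  have cpos: "c > 0" using cL Lpos by simp
  have "ln L \<le> ln c" using cL Lpos cpos by simp
  moreover have "ln L = l" by (simp add: L_def)
  moreover have "ln c \<le> ln M" using cM cpos Mpos by simp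
  ultimately have "1 / (2 * (r + 1)) < ln c" "ln c < 1 / (2 * r)" using l_low lnM_upper by linarith+
  then show ?thesis using rc by blast
qed

end
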